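(* Let $P\subseteq\mathbb{R}^n$ be an $n$-dimensional rational polytope, let $x\in\mathrm{relint}(\mathrm{core}(P))$, and let $F_1,\dots,F_t$ be the facets of $P$ with $d_{F_i}(x)=\mu(P)^{-1}$, with primitive inner normals $a_1,\dots,a_t$. Then $a_1,\dots,a_t$ positively span the linear subspace $K(P)^\perp$. Moreover, if $\mathrm{core}(P)=\{x\}$, then $\{y\in\mathbb{R}^n: d_{F_i}(y)\ge0 \text{ for all } i=1,\dots,t\}$ is a rational polytope containing $P$.
   Context: Write $P$ irredundantly as $P=\{x:\langle a_i,x\rangle\ge b_i\}$ with primitive $a_i\in(\mathbb{Z}^n)^*$, $b_i\in\mathbb{Q}$, each inequality defining a facet $F_i$; $d_{F_i}(x):=\langle a_i,x\rangle-b_i$, $d_P(x):=\min_i d_{F_i}(x)$, $P^{(s)}:=\{x:d_P(x)\ge s\}$. The $\mathbb{Q}$-codegree is $\mu(P):=(\sup\{s>0:P^{(s)}\neq\emptyset\})^{-1}$ and $\mathrm{core}(P):=P^{(1/\mu(P))}$. $K(P)$ is the linear subspace of $\mathbb{R}^n$ parallel to the affine hull of $\mathrm{core}(P)$, and $K(P)^\perp\subseteq(\mathbb{R}^n)^*$ is the set of linear functionals vanishing on $K(P)$. *)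

theory Defs
  imports "HOL-Analysis.Analysis"
begin

text \<open>Vectors in R^n are modelled as real^'n; the dual space is identified with
real^'n via the standard inner product, so a functional a acts as a \<bullet> x.\<close>

definition rational_vec :: "real^'n \<Rightarrow> bool" where
  "rational_vec v \<longleftrightarrow> (\<forall>j. v $ j \<in> \<rat>)"

definition integral_vec :: "real^'n \<Rightarrow> bool" where
  "integral_vec v \<longleftrightarrow> (\<forall>j. v $ j \<in> \<int>)"

text \<open>Primitive lattice vector: integral and not a proper positive integer multiple
of another integral vector (gcd of coordinates is 1).\<close>
definition primitive_vec :: "real^'n \<Rightarrow> bool" where
  "primitive_vec v \<longleftrightarrow> integral_vec v \<and>
     (\<forall>k::int. k > 0 \<longrightarrow> integral_vec ((1 / real_of_int k) *\<^sub>R v) \<longrightarrow> k = 1)"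

definition rational_polytope :: "(real^'n) set \<Rightarrow> bool" where
  "rational_polytope Q \<longleftrightarrow> (\<exists>V. finite V \<and> (\<forall>v\<in>V. rational_vec v) \<and> Q = convex hull V)"

definition dF :: "(nat \<Rightarrow> real^'n) \<Rightarrow> (nat \<Rightarrow> real) \<Rightarrow> nat \<Rightarrow> real^'n \<Rightarrow> real" where
  "dF a b i x = a i \<bullet> x - b i"

definition dP :: "nat \<Rightarrow> (nat \<Rightarrow> real^'n) \<Rightarrow> (nat \<Rightarrow> real) \<Rightarrow> real^'n \<Rightarrow> real" where
  "dP m a b x = Min ((\<lambda>i. dF a b i x) ` {..<m})"

definition Pshift :: "nat \<Rightarrow> (nat \<Rightarrow> real^'n) \<Rightarrow> (nat \<Rightarrow> real) \<Rightarrow> real \<Rightarrow> (real^'n) set" where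
  "Pshift m a b s = {x. dP m a b x \<ge> s}"

definition muQ :: "nat \<Rightarrow> (nat \<Rightarrow> real^'n) \<Rightarrow> (nat \<Rightarrow> real) \<Rightarrow> real" where
  "muQ m a b = inverse (Sup {s. s > 0 \<and> Pshift m a b s \<noteq> {}})"

definition core :: "nat \<Rightarrow> (nat \<Rightarrow> real^'n) \<Rightarrow> (nat \<Rightarrow> real) \<Rightarrow> (real^'n) set" where
  "core m a b = Pshift m a b (inverse (muQ m a b))"

definition Kspace :: "nat \<Rightarrow> (nat \<Rightarrow> real^'n) \<Rightarrow> (nat \<Rightarrow> real) \<Rightarrow> (real^'n) set" where
  "Kspace m a b = {u - v | u v. u \<in> affine hull (core m a b) \<and> v \<in> affine hull (core m a b)}"

definition perp :: "(real^'n) set \<Rightarrow> (real^'n) set" where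
  "perp V = {w. \<forall>v\<in>V. w \<bullet> v = 0}"

definition pos_span :: "nat set \<Rightarrow> (nat \<Rightarrow> real^'n) \<Rightarrow> (real^'n) set" where
  "pos_span T a = {(\<Sum>i\<in>T. c i *\<^sub>R a i) | c. \<forall>i\<in>T. c i \<ge> 0}"

end

theory Submission
  imports Defs
begin


lemma det_Rats:
  fixes A :: "real^'n^'n"
  assumes "\<And>i j. A$i$j \<in> \<rat>"
  shows "det A \<in> \<rat>"
  unfolding det_def using assms by (intro Rats_sum Rats_mult Rats_prod) auto

lemma gram_mult:
  fixes a :: "nat \<Rightarrow> real^'n"
  shows "(\<chi> r c. \<Sum>i\<in>J. a i $ r * a i $ c) *v z = (\<Sum>i\<in>J. (a i \<bullet> z) *\<^sub>R a i)"
  by (simp add: vec_eq_iff matrix_vector_mult_def inner_vec_def sum_component sum_distrib_left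
      sum_distrib_right sum.swap[of _ J] mult.assoc mult.left_commute mult.commute)

lemma rat_unique:
  fixes a :: "nat \<Rightarrow> real^'n" and v :: "real^'n"
  assumes fin: "finite J" and ra: "\<forall>i\<in>J. rational_vec (a i)" and rb: "\<forall>i\<in>J. b i \<in> \<rat>"
    and eq: "\<forall>i\<in>J. a i \<bullet> v = b i" and ker: "\<forall>z. (\<forall>i\<in>J. a i \<bullet> z = 0) \<longrightarrow> z = 0"
  shows "rational_vec v"
proof -
  define G where "G = ((\<chi> r c. \<Sum>i\<in>J. a i $ r * a i $ c) :: real^'n^'n)"
  have Gz: "\<And>z. G *v z = (\<Sum>i\<in>J. (a i \<bullet> z) *\<^sub>R a i)" unfolding G_def by (rule gram_mult)
  have inj: "\<forall>z. G *v z = 0 \<longrightarrow> z = 0"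
  proof (intro allI impI)
    fix z assume "G *v z = 0"
    then have "z \<bullet> (G *v z) = 0" by simp
    hence "(\<Sum>i\<in>J. (a i \<bullet> z)^2) = 0" using Gz
      by (simp add: inner_sum_right power2_eq_square inner_commute)
    hence "\<forall>i\<in>J. (a i \<bullet> z)^2 = 0" using sum_nonneg_eq_0_iff[OF fin, of "\<lambda>i. (a i \<bullet> z)^2"] by simp
    then show "z = 0" using ker by simp
  qed
  then obtain B where "B ** G = mat 1" using matrix_left_invertible_ker by blast
  hence "invertible G" by (meson invertible_left_inverse)
  hence d: "det G \<noteq> 0" by (simp add: invertible_det_nz)
  have Gv: "G *v v = (\<Sum>i\<in>J. b i *\<^sub>R a i)" using Gz eq by simp
  have rG: "\<And>i j. G$i$j \<in> \<rat>" unfolding G_def using ra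
    by (auto simp: rational_vec_def intro!: Rats_sum Rats_mult)
  have rGv: "\<And>i. (G *v v)$i \<in> \<rat>" unfolding Gv using ra rb
    by (auto simp: rational_vec_def sum_component intro!: Rats_sum Rats_mult)
  have vv: "v = (\<chi> k. det(\<chi> i j. if j=k then (G *v v)$i else G$i$j) / det G)" using cramer[OF d] by blast
  have dk: "det(\<chi> i j. if j=k then (G *v v)$i else G$i$j) \<in> \<rat>" for k
    by (rule det_Rats) (simp add: rG rGv)
  show ?thesis unfolding rational_vec_def
  proof
    fix k
    have "v$k = det(\<chi> i j. if j=k then (G *v v)$i else G$i$j) / det G"
      by (subst vv) simp
    then show "v$k \<in> \<rat>" using dk[of k] det_Rats[OF rG] by (simp add: Rats_divide)
  qed
qed



lemma ev_pos:
  assumes "eventually P (at_right (0::real))"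
  obtains t where "t > 0" "P t"
proof -
  from assms obtain c where c: "c > 0" "\<And>y. y > 0 \<Longrightarrow> y < c \<Longrightarrow> P y"
    unfolding eventually_at_right_field by auto
  then show ?thesis using that[of "c/2"] by auto
qed

lemma ev_lin:
  fixes p q :: real
  assumes "p > r"
  shows "eventually (\<lambda>t. p + t * q \<ge> r) (at_right 0)"
proof -
  have "((\<lambda>t. p + t * q) \<longlongrightarrow> p + 0 * q) (at_right 0)"
    by (intro tendsto_intros)
  then have "((\<lambda>t. p + t * q) \<longlongrightarrow> p) (at_right 0)" by simp
  from order_tendstoD(1)[OF this assms] show ?thesis by (rule eventually_mono) simp
qed

lemma extreme_kernel:
  fixes a :: "nat \<Rightarrow> real^'n"
  assumes fin: "finite T" and ext: "v extreme_point_of {y. \<forall>i\<in>T. b i \<le> a i \<bullet> y}"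
  shows "\<forall>z. (\<forall>i\<in>{i\<in>T. a i \<bullet> v = b i}. a i \<bullet> z = 0) \<longrightarrow> z = 0"
proof (intro allI impI, rule ccontr)
  fix z assume h: "\<forall>i\<in>{i\<in>T. a i \<bullet> v = b i}. a i \<bullet> z = 0" and z: "z \<noteq> 0"
  let ?Q = "{y. \<forall>i\<in>T. b i \<le> a i \<bullet> y}"
  have vQ: "v \<in> ?Q" using ext by (simp add: extreme_point_of_def)
  have "\<forall>i\<in>T. eventually (\<lambda>t. b i \<le> a i \<bullet> v + t * (a i \<bullet> z) \<and> b i \<le> a i \<bullet> v + t * (- (a i \<bullet> z))) (at_right 0)"
  proof
    fix i assume i: "i \<in> T"
    show "eventually (\<lambda>t. b i \<le> a i \<bullet> v + t * (a i \<bullet> z) \<and> b i \<le> a i \<bullet> v + t * (- (a i \<bullet> z))) (at_right 0)"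
    proof (cases "a i \<bullet> v = b i")
      case True
      then show ?thesis using h i by simp
    next
      case False
      then have "a i \<bullet> v > b i" using vQ i by force
      then show ?thesis using ev_lin[of "b i" "a i \<bullet> v" "a i \<bullet> z"] ev_lin[of "b i" "a i \<bullet> v" "- (a i \<bullet> z)"]
        by (simp only: eventually_conj_iff) 
    qed
  qed
  from eventually_ball_finite[OF fin this] obtain t where t: "t > 0"
    "\<forall>i\<in>T. b i \<le> a i \<bullet> v + t * (a i \<bullet> z) \<and> b i \<le> a i \<bullet> v + t * (- (a i \<bullet> z))"
    by (rule ev_pos)
  have p: "v + t *\<^sub>R z \<in> ?Q" and q: "v - t *\<^sub>R z \<in> ?Q" using t(2)
    by (auto simp: inner_add_right inner_diff_right)
  have ne: "v - t *\<^sub>R z \<noteq> v + t *\<^sub>R z"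
  proof
    assume "v - t *\<^sub>R z = v + t *\<^sub>R z"
    then have "(v - t *\<^sub>R z) \<bullet> z = (v + t *\<^sub>R z) \<bullet> z" by (rule arg_cong[where f="\<lambda>w. w \<bullet> z"])
    then have "t * (z \<bullet> z) = 0" by (simp add: inner_diff_left inner_add_left)
    then show False using t(1) z by simp
  qed
  have "midpoint (v - t *\<^sub>R z) (v + t *\<^sub>R z) = v"
    by (simp add: midpoint_def vec_eq_iff)
  then have "v \<in> open_segment (v - t *\<^sub>R z) (v + t *\<^sub>R z)"
    using midpoint_in_open_segment ne by metis
  then show False using ext p q by (auto simp: extreme_point_of_def)
qed



lemma pos_spanI:
  assumes "\<forall>i\<in>T. c i \<ge> 0" "v = (\<Sum>i\<in>T. c i *\<^sub>R a i)"
  shows "v \<in> pos_span T a"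
  using assms unfolding pos_span_def by blast

lemma pos_span_cone:
  fixes a :: "nat \<Rightarrow> real^'n"
  shows "convex_cone (pos_span T a)"
proof -
  have ne: "0 \<in> pos_span T a" unfolding pos_span_def
    by (rule CollectI, rule exI[of _ "\<lambda>_. 0"]) simp
  have cv: "convex (pos_span T a)" unfolding convex_def
  proof (intro ballI allI impI)
    fix x y and u v :: real assume "x \<in> pos_span T a" "y \<in> pos_span T a" and uv: "0 \<le> u" "0 \<le> v" "u + v = 1"
    then obtain c d where c: "x = (\<Sum>i\<in>T. c i *\<^sub>R a i)" "\<forall>i\<in>T. c i \<ge> 0"
      and d: "y = (\<Sum>i\<in>T. d i *\<^sub>R a i)" "\<forall>i\<in>T. d i \<ge> 0" unfolding pos_span_def by auto
    have "u *\<^sub>R x + v *\<^sub>R y = (\<Sum>i\<in>T. (u * c i + v * d i) *\<^sub>R a i)"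
      by (simp add: c d scaleR_sum_right sum.distrib scaleR_add_left)
    moreover have "\<forall>i\<in>T. u * c i + v * d i \<ge> 0" using c d uv by simp
    ultimately show "u *\<^sub>R x + v *\<^sub>R y \<in> pos_span T a" by (intro pos_spanI) 
  qed
  have cn: "conic (pos_span T a)" unfolding conic_def
  proof (intro allI impI)
    fix x and u :: real assume "x \<in> pos_span T a" "0 \<le> u"
    then obtain c where c: "x = (\<Sum>i\<in>T. c i *\<^sub>R a i)" "\<forall>i\<in>T. c i \<ge> 0"
      unfolding pos_span_def by auto
    have "u *\<^sub>R x = (\<Sum>i\<in>T. (u * c i) *\<^sub>R a i)"
      by (simp add: c scaleR_sum_right)
    moreover have "\<forall>i\<in>T. u * c i \<ge> 0" using c \<open>0 \<le> u\<close> by simp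
    ultimately show "u *\<^sub>R x \<in> pos_span T a" by (intro pos_spanI)
  qed
  show ?thesis using ne cv cn unfolding convex_cone_def by auto
qed

lemma gen_in_pos_span:
  fixes a :: "nat \<Rightarrow> real^'n"
  assumes "finite T" "j \<in> T"
  shows "a j \<in> pos_span T a"
proof -
  have "(\<Sum>i\<in>T. (if i = j then 1 else 0) *\<^sub>R a i) = (\<Sum>i\<in>T. if i = j then a i else 0)"
    by (rule sum.cong) auto
  also have "\<dots> = a j" using assms by (simp add: sum.delta)
  finally show ?thesis
    by (intro pos_spanI[of _ "\<lambda>i. if i = j then 1 else 0"]) auto
qed



theorem lemma2p2:
  fixes P :: "(real^'n) set" and m :: nat and a :: "nat \<Rightarrow> real^'n"
    and b :: "nat \<Rightarrow> real" and x :: "real^'n"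
  assumes "rational_polytope P"
    and "aff_dim P = int CARD('n)"
    and "P = {y. \<forall>i<m. a i \<bullet> y \<ge> b i}"
    and "\<forall>i<m. primitive_vec (a i)"
    and "\<forall>i<m. b i \<in> \<rat>"
    and "\<forall>i<m. (P \<inter> {y. a i \<bullet> y = b i}) facet_of P"
    and "inj_on (\<lambda>i. P \<inter> {y. a i \<bullet> y = b i}) {..<m}"
    and "x \<in> rel_interior (core m a b)"
  shows "pos_span {i. i < m \<and> dF a b i x = inverse (muQ m a b)} a = perp (Kspace m a b)
         \<and> (core m a b = {x} \<longrightarrow>
           rational_polytope {y. \<forall>i. i < m \<and> dF a b i x = inverse (muQ m a b) \<longrightarrow> dF a b i y \<ge> 0}
           \<and> P \<subseteq> {y. \<forall>i. i < m \<and> dF a b i x = inverse (muQ m a b) \<longrightarrow> dF a b i y \<ge> 0})"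
proof -
  define s where "s = inverse (muQ m a b)"
  define C where "C = core m a b"
  define T where "T = {i. i < m \<and> dF a b i x = s}"
  have finT: "finite T" unfolding T_def by simp
  have m0: "m > 0"
  proof (rule ccontr)
    assume "\<not> m > 0"
    then have "P = UNIV" using assms(3) by simp
    moreover obtain V where "finite V" "P = convex hull V"
      using assms(1) unfolding rational_polytope_def by blast
    ultimately show False using finite_imp_bounded_convex_hull not_bounded_UNIV by metis
  qed
  have Cdef: "\<And>y. y \<in> C \<longleftrightarrow> (\<forall>i<m. dF a b i y \<ge> s)"
  proof -
    fix y
    have "(s \<le> Min ((\<lambda>i. dF a b i y) ` {..<m})) \<longleftrightarrow> (\<forall>z\<in>(\<lambda>i. dF a b i y) ` {..<m}. s \<le> z)"
      using m0 by (intro Min_ge_iff) auto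
    then show "y \<in> C \<longleftrightarrow> (\<forall>i<m. dF a b i y \<ge> s)"
      unfolding C_def core_def Pshift_def dP_def s_def by auto
  qed
  have xC: "x \<in> C" using assms(8) rel_interior_subset C_def by blast
  obtain e where e: "e > 0" "ball x e \<inter> affine hull C \<subseteq> C"
    using assms(8) unfolding C_def[symmetric] mem_rel_interior_ball by blast
  have tight: "a i \<bullet> y = b i + s" if i: "i \<in> T" and y: "y \<in> C" for i y
  proof -
    have im: "i < m" and ix: "a i \<bullet> x = b i + s" using i unfolding T_def dF_def by auto
    define d where "d = norm (x - y)"
    define t where "t = e / (2 * (d + 1))"
    have d0: "d \<ge> 0" unfolding d_def by simp
    have t0: "t > 0" unfolding t_def using e d0 by simp
    have de: "d * e \<ge> 0" using d0 e by simp
    have "t * d < e" unfolding t_def using e d0 de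
      by (simp add: field_simps add_nonneg_pos)
    define z where "z = x + t *\<^sub>R (x - y)"
    have "dist x z = t * d" unfolding z_def d_def dist_norm using t0 by simp
    then have zb: "z \<in> ball x e" using \<open>t * d < e\<close> by simp
    have "z = (1 + t) *\<^sub>R x + (- t) *\<^sub>R y" unfolding z_def by (simp add: algebra_simps)
    moreover have "(1 + t) *\<^sub>R x + (- t) *\<^sub>R y \<in> affine hull C"
      by (rule mem_affine[OF affine_affine_hull]) (auto intro: hull_inc xC y)
    ultimately have "z \<in> C" using zb e(2) by auto
    then have "a i \<bullet> z - b i \<ge> s" using Cdef im unfolding dF_def by blast
    then have "t * (a i \<bullet> x - a i \<bullet> y) \<ge> 0" unfolding z_def using ix
      by (simp add: inner_add_right inner_diff_right)
    then have "a i \<bullet> y \<le> a i \<bullet> x" using t0 by (simp add: zero_le_mult_iff)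
    moreover have "a i \<bullet> y - b i \<ge> s" using Cdef im y unfolding dF_def by blast
    ultimately show ?thesis using ix by simp
  qed
  have Ksub: "a i \<bullet> v = 0" if i: "i \<in> T" and v: "v \<in> Kspace m a b" for i v
  proof -
    have "affine hull C \<subseteq> {y. a i \<bullet> y = b i + s}"
      by (rule hull_minimal) (auto intro: affine_hyperplane tight[OF i])
    moreover obtain u w where "v = u - w" "u \<in> affine hull C" "w \<in> affine hull C"
      using v unfolding Kspace_def C_def by blast
    ultimately have "a i \<bullet> u = b i + s" "a i \<bullet> w = b i + s" by auto
    then show ?thesis using \<open>v = u - w\<close> by (simp add: inner_diff_right)
  qed
  have part1: "pos_span T a = perp (Kspace m a b)"
  proof
    show "pos_span T a \<subseteq> perp (Kspace m a b)"
    proof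
      fix w assume "w \<in> pos_span T a"
      then obtain c where c: "w = (\<Sum>i\<in>T. c i *\<^sub>R a i)" unfolding pos_span_def by blast
      show "w \<in> perp (Kspace m a b)" unfolding perp_def
        using Ksub by (auto simp: c inner_sum_left)
    qed
  next
    show "perp (Kspace m a b) \<subseteq> pos_span T a"
    proof
      fix w assume w: "w \<in> perp (Kspace m a b)"
      define D where "D = convex_cone hull (a ` T)"
      have DP: "D \<subseteq> pos_span T a" unfolding D_def
        by (rule hull_minimal) (auto intro: gen_in_pos_span[OF finT] pos_span_cone)
      have "w \<in> D"
      proof (rule ccontr)
        assume wD: "w \<notin> D"
        obtain u \<beta> where u: "u \<bullet> w < \<beta>" "\<forall>z\<in>D. \<beta> < u \<bullet> z"
          using separating_hyperplane_closed_point[OF _ _ wD] unfolding D_def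
          using convex_convex_cone_hull closed_convex_cone_hull finT by blast
        have "0 \<in> D" unfolding D_def by (rule convex_cone_hull_contains_0)
        then have b0: "\<beta> < 0" using u by auto
        have ua: "u \<bullet> a i \<ge> 0" if i: "i \<in> T" for i
        proof (rule ccontr)
          assume "\<not> u \<bullet> a i \<ge> 0"
          then have neg: "u \<bullet> a i < 0" by simp
          have "a i \<in> D" unfolding D_def using i by (auto intro: hull_inc)
          moreover have "0 \<le> \<beta> / (u \<bullet> a i)" using b0 neg by (simp add: divide_nonpos_neg)
          ultimately have "(\<beta> / (u \<bullet> a i)) *\<^sub>R a i \<in> D"
            unfolding D_def by (rule conicD[OF conic_convex_cone_hull])
          then have "\<beta> < u \<bullet> ((\<beta> / (u \<bullet> a i)) *\<^sub>R a i)" using u(2) by blast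
          then have "\<beta> < (\<beta> / (u \<bullet> a i)) * (u \<bullet> a i)" by simp
          then show False using neg by simp
        qed
        have "\<forall>i\<in>{..<m}. eventually (\<lambda>t. s \<le> (a i \<bullet> x - b i) + t * (a i \<bullet> u) \<or> t \<le> 0) (at_right 0)"
        proof
          fix i assume "i \<in> {..<m}"
          then have im: "i < m" by simp
          show "eventually (\<lambda>t. s \<le> (a i \<bullet> x - b i) + t * (a i \<bullet> u) \<or> t \<le> 0) (at_right 0)"
          proof (cases "i \<in> T")
            case True
            then have "a i \<bullet> x - b i = s" unfolding T_def dF_def by simp
            moreover have "a i \<bullet> u \<ge> 0" using ua[OF True] by (simp add: inner_commute)
            ultimately show ?thesis by (auto intro!: always_eventually)
          next
            case False
            then have "a i \<bullet> x - b i > s" using Cdef xC im unfolding T_def dF_def by force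
            from ev_lin[OF this, of "a i \<bullet> u"] show ?thesis by (rule eventually_mono) simp
          qed
        qed
        from eventually_ball_finite[OF _ this] obtain t where t: "t > 0"
          "\<forall>i\<in>{..<m}. s \<le> (a i \<bullet> x - b i) + t * (a i \<bullet> u) \<or> t \<le> 0"
          by (auto elim: ev_pos)
        have "x + t *\<^sub>R u \<in> C" unfolding Cdef dF_def using t
          by (auto simp: inner_add_right algebra_simps)
        then have "(x + t *\<^sub>R u) - x \<in> Kspace m a b" unfolding Kspace_def C_def[symmetric]
          using xC by (blast intro: hull_inc)
        then have "w \<bullet> (t *\<^sub>R u) = 0" using w unfolding perp_def by auto
        then have "w \<bullet> u = 0" using t(1) by simp
        then show False using u(1) b0 by (simp add: inner_commute)
      qed
      then show "w \<in> pos_span T a" using DP by blast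
    qed
  qed
  have part2: "rational_polytope {y. \<forall>i. i < m \<and> dF a b i x = s \<longrightarrow> dF a b i y \<ge> 0}
           \<and> P \<subseteq> {y. \<forall>i. i < m \<and> dF a b i x = s \<longrightarrow> dF a b i y \<ge> 0}" if cx: "C = {x}"
  proof -
    have "Kspace m a b = {0}" unfolding Kspace_def C_def[symmetric] cx by auto
    then have "perp (Kspace m a b) = UNIV" unfolding perp_def by auto
    with part1 have PS: "pos_span T a = UNIV" by simp
    define Q where "Q = {y. \<forall>i\<in>T. b i \<le> a i \<bullet> y}"
    have Qeq: "{y. \<forall>i. i < m \<and> dF a b i x = s \<longrightarrow> dF a b i y \<ge> 0} = Q"
      unfolding Q_def T_def dF_def by auto
    have PQ: "P \<subseteq> Q" unfolding Q_def T_def using assms(3) by auto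
    have lb: "\<forall>v. \<exists>L. \<forall>y\<in>Q. L \<le> v \<bullet> y"
    proof
      fix v
      have "v \<in> pos_span T a" using PS by simp
      then obtain c where c: "v = (\<Sum>i\<in>T. c i *\<^sub>R a i)" "\<forall>i\<in>T. c i \<ge> 0"
        unfolding pos_span_def by blast
      show "\<exists>L. \<forall>y\<in>Q. L \<le> v \<bullet> y"
      proof (intro exI ballI)
        fix y assume "y \<in> Q"
        then have "\<And>i. i \<in> T \<Longrightarrow> c i * b i \<le> c i * (a i \<bullet> y)"
          using c(2) unfolding Q_def by (auto intro: mult_left_mono)
        then have "(\<Sum>i\<in>T. c i * b i) \<le> (\<Sum>i\<in>T. c i * (a i \<bullet> y))" by (rule sum_mono)
        also have "\<dots> = v \<bullet> y" by (simp add: c(1) inner_sum_left)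
        finally show "(\<Sum>i\<in>T. c i * b i) \<le> v \<bullet> y" .
      qed
    qed
    then obtain L where L: "\<forall>v. \<forall>y\<in>Q. L v \<le> v \<bullet> y" by metis
    have bQ: "bounded Q"
    proof (rule bounded_subset[OF bounded_cbox])
      show "Q \<subseteq> cbox (\<chi> j. L (axis j 1)) (\<chi> j. - L (- axis j 1))"
      proof
        fix y assume y: "y \<in> Q"
        show "y \<in> cbox (\<chi> j. L (axis j 1)) (\<chi> j. - L (- axis j 1))" unfolding mem_box_cart
        proof
          fix j
          have "L (axis j 1) \<le> axis j 1 \<bullet> y" "L (- axis j 1) \<le> (- axis j 1) \<bullet> y" using L y by blast+
          then show "(\<chi> j. L (axis j 1)) $ j \<le> y $ j \<and> y $ j \<le> (\<chi> j. - L (- axis j 1)) $ j"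
            by (simp add: inner_axis')
        qed
      qed
    qed
    have polyQ: "polyhedron Q"
    proof -
      have "Q = \<Inter> ((\<lambda>i. {y. b i \<le> a i \<bullet> y}) ` T)" unfolding Q_def by auto
      moreover have "polyhedron (\<Inter> ((\<lambda>i. {y. b i \<le> a i \<bullet> y}) ` T))"
        using finT by (auto intro!: polyhedron_Inter polyhedron_halfspace_ge)
      ultimately show ?thesis by simp
    qed
    have compQ: "compact Q" using bQ polyhedron_imp_closed[OF polyQ] by (simp add: compact_eq_bounded_closed)
    have QE: "Q = convex hull {v. v extreme_point_of Q}"
      using Krein_Milman_Minkowski compQ polyhedron_imp_convex[OF polyQ] by blast
    have finE: "finite {v. v extreme_point_of Q}" using finite_polyhedron_extreme_points[OF polyQ] .
    have ratE: "\<forall>v\<in>{v. v extreme_point_of Q}. rational_vec v"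
    proof
      fix v assume "v \<in> {v. v extreme_point_of Q}"
      then have ev: "v extreme_point_of {y. \<forall>i\<in>T. b i \<le> a i \<bullet> y}" unfolding Q_def by simp
      show "rational_vec v"
      proof (rule rat_unique[where J="{i\<in>T. a i \<bullet> v = b i}" and a=a and b=b])
        show "finite {i\<in>T. a i \<bullet> v = b i}" using finT by simp
        show "\<forall>i\<in>{i\<in>T. a i \<bullet> v = b i}. rational_vec (a i)" using assms(4) Ints_subset_Rats
          unfolding T_def primitive_vec_def integral_vec_def rational_vec_def by blast
        show "\<forall>i\<in>{i\<in>T. a i \<bullet> v = b i}. b i \<in> \<rat>" using assms(5) unfolding T_def by auto
        show "\<forall>i\<in>{i\<in>T. a i \<bullet> v = b i}. a i \<bullet> v = b i" by simp
        show "\<forall>z. (\<forall>i\<in>{i\<in>T. a i \<bullet> v = b i}. a i \<bullet> z = 0) \<longrightarrow> z = 0"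
          by (rule extreme_kernel[OF finT ev])
      qed
    qed
    show ?thesis unfolding Qeq rational_polytope_def using QE finE ratE PQ by blast
  qed
  show ?thesis using part1 part2 unfolding s_def[symmetric] C_def[symmetric] T_def[symmetric] by blast
qed

end
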